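(* Let $\mathcal X=\min\{\mathfrak g_{sr},\mathfrak g_{sd}\}$ and $\bar C_{s_1,\mathrm{MRC}}:=\tfrac12\mathbb E[\log_2(1+\rho\mathcal X)-\log_2(1+a_2\rho\mathcal X)]$. Then, with $\Phi=\frac{m_{sr}}{\Omega_{sr}}+\frac{m_{sd}}{\Omega_{sd}}$, $$\bar C_{s_1,\mathrm{MRC}}=\frac{1}{2\ln2}\sum_{\mu=0}^{m_{sr}N_r-1}\sum_{\nu=0}^{m_{sd}N_d-1}\frac{m_{sr}^{\mu}m_{sd}^{\nu}\,\Gamma(\mu+\nu+1)}{\Omega_{sr}^{\mu}\Omega_{sd}^{\nu}\,\mu!\,\nu!\,\rho^{\mu+\nu}}\Big\{e^{\Phi/\rho}\,\Gamma\Big[-\mu-\nu,\tfrac{\Phi}{\rho}\Big]-\frac{1}{a_2^{\mu+\nu}}e^{\Phi/(\rho a_2)}\,\Gamma\Big[-\mu-\nu,\tfrac{\Phi}{\rho a_2}\Big]\Big\}.$$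
   Context: Let $N_r,N_d$ be positive integers, $m_{sr},m_{sd},m_{rd}$ positive integers, and $\Omega_{sr},\Omega_{sd},\Omega_{rd}>0$. Let $\{G_{sr,i}\}_{i=1}^{N_r}$, $\{G_{sd,j}\}_{j=1}^{N_d}$, $\{G_{rd,k}\}_{k=1}^{N_d}$ be mutually independent random variables, where each $G_{sr,i}$ has the Gamma density $f(x)=\frac{(m_{sr}/\Omega_{sr})^{m_{sr}}x^{m_{sr}-1}}{\Gamma(m_{sr})}e^{-m_{sr}x/\Omega_{sr}}$, $x>0$, and analogously $G_{sd,j}$ with parameters $(m_{sd},\Omega_{sd})$ and $G_{rd,k}$ with $(m_{rd},\Omega_{rd})$. Maximal-ratio combining (MRC) gains: $\mathfrak g_{sr}=\sum_{i=1}^{N_r}G_{sr,i}$, $\mathfrak g_{sd}=\sum_{j=1}^{N_d}G_{sd,j}$, $\mathfrak g_{rd}=\sum_{k=1}^{N_d}G_{rd,k}$. Let $\rho>0$ and $a_1,a_2\in(0,1)$ with $a_1+a_2=1$, $a_1>a_2$. $\Gamma[s,z]=\int_z^\infty t^{s-1}e^{-t}\,dt$ ($z>0$) is the upper incomplete Gamma function. *)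

theory Defs
  imports "HOL-Probability.Probability"
begin

text \<open>Index type for the independent channel gains: SR i (i < N_r), SD j, RD k (j,k < N_d).\<close>
datatype gidx = SR nat | SD nat | RD nat

text \<open>Gamma (Nakagami-m power) density with shape m and mean Omega.\<close>
definition gamma_pdf :: "real \<Rightarrow> real \<Rightarrow> real \<Rightarrow> real" where
  "gamma_pdf m \<Omega> x =
     (if x > 0 then (m / \<Omega>) powr m * x powr (m - 1) / Gamma m * exp (- m * x / \<Omega>) else 0)"

definition upper_Gamma :: "real \<Rightarrow> real \<Rightarrow> real" where
  "upper_Gamma s z = (\<integral>t\<in>{z<..}. t powr (s - 1) * exp (- t) \<partial>lborel)"

end

theory Submission
  imports Defs "HOL-Real_Asymp.Real_Asymp"
begin


lemma nn_moment:
  assumes "0 < (\<Phi>::real)"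
  shows "(\<integral>\<^sup>+t. ennreal (t^n * exp(-\<Phi>*t) * indicator {0<..} t) \<partial>lborel) = ennreal (fact n / \<Phi>^(n+1))"
proof -
  have "(\<integral>\<^sup>+t. ennreal (erlang_density 0 \<Phi> t * t^n) \<partial>lborel)
     = (\<integral>\<^sup>+t. ennreal \<Phi> * ennreal (t^n * exp(-\<Phi>*t) * indicator {0<..} t) \<partial>lborel)"
    apply (rule nn_integral_cong_AE)
    using AE_lborel_singleton[of 0]
    by eventually_elim (use assms in \<open>auto simp: erlang_density_def ennreal_mult[symmetric] split: split_indicator\<close>)
  also have "\<dots> = ennreal \<Phi> * (\<integral>\<^sup>+t. ennreal (t^n * exp(-\<Phi>*t) * indicator {0<..} t) \<partial>lborel)"
    by (rule nn_integral_cmult) measurable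
  finally have eq: "ennreal \<Phi> * (\<integral>\<^sup>+t. ennreal (t^n * exp(-\<Phi>*t) * indicator {0<..} t) \<partial>lborel)
      = ennreal (fact n / \<Phi>^n)"
    using nn_integral_erlang_ith_moment[OF assms, of 0 n] by simp
  have "ennreal (fact n / \<Phi>^(n+1)) = ennreal (1/\<Phi>) * ennreal (fact n / \<Phi>^n)"
    using assms by (simp add: ennreal_mult[symmetric] field_simps)
  also have "\<dots> = ennreal (1/\<Phi>) * ennreal \<Phi> * (\<integral>\<^sup>+t. ennreal (t^n * exp(-\<Phi>*t) * indicator {0<..} t) \<partial>lborel)"
    by (metis eq mult.assoc)
  also have "ennreal (1/\<Phi>) * ennreal \<Phi> = 1"
    using assms by (simp add: ennreal_mult[symmetric])
  finally show ?thesis by simp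
qed

lemma moment:
  assumes "0 < (\<Phi>::real)"
  shows "integrable lborel (\<lambda>t. t^n * exp(-\<Phi>*t) * indicator {0<..} t)"
    and "(\<integral>t. t^n * exp(-\<Phi>*t) * indicator {0<..} t \<partial>lborel) = fact n / \<Phi>^(n+1)"
proof -
  show "integrable lborel (\<lambda>t. t^n * exp(-\<Phi>*t) * indicator {0<..} t)"
    using nn_moment[OF assms, of n] by (intro integrableI_nonneg) (auto split: split_indicator)
  show "(\<integral>t. t^n * exp(-\<Phi>*t) * indicator {0<..} t \<partial>lborel) = fact n / \<Phi>^(n+1)"
  proof -
    have "(\<integral>t. t^n * exp(-\<Phi>*t) * indicator {0<..} t \<partial>lborel)
       = enn2real (\<integral>\<^sup>+t. ennreal (t^n * exp(-\<Phi>*t) * indicator {0<..} t) \<partial>lborel)"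
      by (rule integral_eq_nn_integral) (auto split: split_indicator)
    also have "\<dots> = fact n / \<Phi>^(n+1)"
      by (simp only: nn_moment[OF assms]) (use assms in simp)
    finally show ?thesis .
  qed
qed



lemma K_integrable:
  assumes "0 < (c::real)" "0 < (\<Phi>::real)"
  shows "integrable lborel (\<lambda>t. c * t^n * exp(-\<Phi>*t) / (1+c*t) * indicator {0<..} t)"
proof (rule Bochner_Integration.integrable_bound)
  show "integrable lborel (\<lambda>t. c * (t^n * exp(-\<Phi>*t) * indicator {0<..} t))"
    using moment(1)[OF assms(2)] by (rule integrable_mult_right)
  show "AE x in lborel. norm (c * x^n * exp(-\<Phi>*x) / (1+c*x) * indicator {0<..} x)
      \<le> norm (c * (x^n * exp(-\<Phi>*x) * indicator {0<..} x))"
  proof (rule AE_I2)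
    fix x :: real
    show "norm (c * x^n * exp(-\<Phi>*x) / (1+c*x) * indicator {0<..} x)
      \<le> norm (c * (x^n * exp(-\<Phi>*x) * indicator {0<..} x))"
    proof (cases "x > 0")
      case True
      have "c * x^n * exp(-\<Phi>*x) / (1+c*x) \<le> c * x^n * exp(-\<Phi>*x) / 1"
        using assms True by (intro divide_left_mono) (auto intro!: mult_nonneg_nonneg add_pos_pos)
      then show ?thesis using True assms by (simp add: abs_mult)
    qed auto
  qed
qed measurable

lemma K_alg: "(1::real) + c*t \<noteq> 0 \<Longrightarrow> c * (c * t^(Suc n) * E / (1+c*t)) + c * t^n * E / (1+c*t) = c * t^n * E"
proof -
  assume h: "(1::real) + c*t \<noteq> 0"
  have "c * (c * t^(Suc n) * E / (1+c*t)) + c * t^n * E / (1+c*t) = (c * t^n * E) * (1+c*t) / (1+c*t)"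
    by (simp add: algebra_simps add_divide_distrib)
  also have "\<dots> = c * t^n * E" using h by simp
  finally show ?thesis .
qed

lemma K_rec:
  assumes "0 < (c::real)" "0 < (\<Phi>::real)"
  shows "c * (\<integral>t. c * t^(Suc n) * exp(-\<Phi>*t) / (1+c*t) * indicator {0<..} t \<partial>lborel)
       + (\<integral>t. c * t^n * exp(-\<Phi>*t) / (1+c*t) * indicator {0<..} t \<partial>lborel)
       = c * fact n / \<Phi>^(n+1)"
proof -
  define F where "F = (\<lambda>k t. c * t^k * exp(-\<Phi>*t) / (1+c*t) * indicator {0<..} t)"
  have I: "integrable lborel (F k)" for k
    unfolding F_def by (rule K_integrable[OF assms])
  have "c * (\<integral>t. F (Suc n) t \<partial>lborel) + (\<integral>t. F n t \<partial>lborel)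
     = (\<integral>t. c * F (Suc n) t + F n t \<partial>lborel)"
    by (subst Bochner_Integration.integral_add[OF integrable_mult_right[OF I] I]) (simp only: integral_mult_right_zero)
  also have "\<dots> = (\<integral>t. c * (t^n * exp(-\<Phi>*t) * indicator {0<..} t) \<partial>lborel)"
  proof (intro Bochner_Integration.integral_cong refl)
    fix t :: real
    show "c * F (Suc n) t + F n t = c * (t^n * exp(-\<Phi>*t) * indicator {0<..} t)"
    proof (cases "t > 0")
      case True
      then have "1 + c*t \<noteq> 0" using assms by (smt (verit) mult_pos_pos)
      then show ?thesis using True K_alg[of c t n "exp(-\<Phi>*t)"] by (simp add: F_def)
    qed (simp add: F_def)
  qed
  also have "\<dots> = c * fact n / \<Phi>^(n+1)"
    using moment(2)[OF assms(2)] by simp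
  finally show ?thesis unfolding F_def .
qed

lemma UG_integrable:
  assumes "0 < (z::real)" "s \<le> 1"
  shows "integrable lborel (\<lambda>t. indicator {z<..} t *\<^sub>R (t powr (s - 1) * exp(-t)))"
proof (rule Bochner_Integration.integrable_bound)
  show "integrable lborel (\<lambda>t. z powr (s-1) * (t^0 * exp(-1*t) * indicator {0<..} t))"
    using moment(1)[of 1 0] by (intro integrable_mult_right) simp
  show "AE x in lborel. norm (indicator {z<..} x *\<^sub>R (x powr (s - 1) * exp(-x)))
      \<le> norm (z powr (s-1) * (x^0 * exp(-1*x) * indicator {0<..} x))"
  proof (rule AE_I2)
    fix x :: real
    show "norm (indicator {z<..} x *\<^sub>R (x powr (s - 1) * exp(-x)))
      \<le> norm (z powr (s-1) * (x^0 * exp(-1*x) * indicator {0<..} x))"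
    proof (cases "x > z")
      case True
      have "x powr (s-1) \<le> z powr (s-1)"
        using assms True by (intro powr_mono2') auto
      then show ?thesis using True assms by (simp add: abs_mult)
    qed (use assms in auto)
  qed
qed measurable



lemma UG_rec:
  assumes z: "0 < (z::real)"
  shows "upper_Gamma (-real n) z + (real n + 1) * upper_Gamma (-real (Suc n)) z
         = z powr (-real n - 1) * exp(-z)"
proof -
  define r where "r = -real n - 1"
  define f where "f t = t powr r * exp(-t) + (real n + 1) * (t powr (r - 1) * exp(-t))" for t :: real
  define F where "F t = -(t powr r * exp(-t))" for t :: real
  have r: "r < 0" unfolding r_def by simp
  have fm: "f \<in> borel_measurable borel" unfolding f_def by measurable
  have D: "DERIV F t :> f t" if "z \<le> t" for t
  proof -
    have t: "0 < t" using that z by simp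
    have "DERIV F t :> -((r * t powr (r - 1)) * exp(-t) + t powr r * (exp(-t) * (-1)))"
      unfolding F_def using t by (intro derivative_eq_intros refl) auto
    also have "-((r * t powr (r - 1)) * exp(-t) + t powr r * (exp(-t) * (-1))) = f t"
      unfolding f_def r_def by (simp add: algebra_simps)
    finally show ?thesis .
  qed
  have fnn: "0 \<le> f t" for t unfolding f_def by simp
  have lim: "(F \<longlongrightarrow> 0) at_top"
  proof -
    have "((\<lambda>t. t powr r) \<longlongrightarrow> 0) at_top"
      by (rule tendsto_neg_powr[OF r filterlim_ident])
    moreover have "((\<lambda>t::real. exp(-t)) \<longlongrightarrow> 0) at_top" by real_asymp
    ultimately have "((\<lambda>t. t powr r * exp(-t)) \<longlongrightarrow> 0) at_top"
      by (rule tendsto_mult_zero)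
    then have "((\<lambda>t. -(t powr r * exp(-t))) \<longlongrightarrow> -0) at_top"
      by (rule tendsto_minus)
    then show ?thesis unfolding F_def by simp
  qed
  have nn: "(\<integral>\<^sup>+t. ennreal (f t) * indicator {z..} t \<partial>lborel) = ennreal (0 - F z)"
    by (rule nn_integral_FTC_atLeast[OF fm D fnn lim])
  have nn': "(\<integral>\<^sup>+t. ennreal (f t * indicator {z..} t) \<partial>lborel) = ennreal (0 - F z)"
    unfolding nn[symmetric] by (intro nn_integral_cong) (simp split: split_indicator)
  have int: "(\<integral>t. f t * indicator {z..} t \<partial>lborel) = 0 - F z"
  proof -
    have "(\<integral>t. f t * indicator {z..} t \<partial>lborel) = enn2real (\<integral>\<^sup>+t. ennreal (f t * indicator {z..} t) \<partial>lborel)"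
      using fm by (intro integral_eq_nn_integral) (auto simp: fnn)
    also have "\<dots> = 0 - F z" unfolding nn' using z by (simp add: F_def)
    finally show ?thesis .
  qed
  have I1: "integrable lborel (\<lambda>t. indicator {z<..} t *\<^sub>R (t powr (-real n - 1) * exp(-t)))"
    using UG_integrable[OF z, of "-real n"] by simp
  have I2: "integrable lborel (\<lambda>t. indicator {z<..} t *\<^sub>R (t powr (-real (Suc n) - 1) * exp(-t)))"
    using UG_integrable[OF z, of "-real (Suc n)"] by simp
  have "upper_Gamma (-real n) z + (real n + 1) * upper_Gamma (-real (Suc n)) z
      = (\<integral>t. indicator {z<..} t *\<^sub>R (t powr (-real n - 1) * exp(-t))
             + (real n + 1) * (indicator {z<..} t *\<^sub>R (t powr (-real (Suc n) - 1) * exp(-t))) \<partial>lborel)"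
    unfolding upper_Gamma_def set_lebesgue_integral_def
    by (subst Bochner_Integration.integral_add[OF I1 integrable_mult_right[OF I2]])
       (simp only: integral_mult_right_zero)
  also have "\<dots> = (\<integral>t. f t * indicator {z..} t \<partial>lborel)"
  proof (rule integral_cong_AE)
    have e: "-real (Suc n) - 1 = r - 1" unfolding r_def by simp
    have "indicator {z<..} t *\<^sub>R (t powr (-real n - 1) * exp(-t))
             + (real n + 1) * (indicator {z<..} t *\<^sub>R (t powr (-real (Suc n) - 1) * exp(-t)))
          = f t * indicator {z..} t" if "t \<noteq> z" for t
      unfolding e r_def[symmetric] f_def using that by (cases "z < t") (simp_all add: indicator_def)
    then show "AE t in lborel. indicator {z<..} t *\<^sub>R (t powr (-real n - 1) * exp(-t))
             + (real n + 1) * (indicator {z<..} t *\<^sub>R (t powr (-real (Suc n) - 1) * exp(-t)))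
          = f t * indicator {z..} t"
      using AE_lborel_singleton[of z] by (auto elim!: eventually_mono)
    show "(\<lambda>t. f t * indicator {z..} t) \<in> borel_measurable lborel" using fm by measurable
  qed measurable
  also have "\<dots> = z powr (-real n - 1) * exp(-z)"
    unfolding int F_def r_def by simp
  finally show ?thesis .
qed



lemma K0:
  assumes c: "0 < (c::real)" and P: "0 < (\<Phi>::real)"
  shows "(\<integral>t. c * t^0 * exp(-\<Phi>*t) / (1+c*t) * indicator {0<..} t \<partial>lborel)
       = exp(\<Phi>/c) * upper_Gamma (-real (0::nat)) (\<Phi>/c)"
proof -
  define z where "z = \<Phi>/c"
  have z: "0 < z" unfolding z_def using c P by simp
  define g where "g t = indicator {z<..} t *\<^sub>R (t powr (-real (0::nat) - 1) * exp(-t))" for t :: real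
  have "upper_Gamma (-real (0::nat)) z = (\<integral>t. g t \<partial>lborel)"
    unfolding upper_Gamma_def set_lebesgue_integral_def g_def ..
  also have "\<dots> = \<bar>\<Phi>\<bar> *\<^sub>R (\<integral>x. g (z + \<Phi> * x) \<partial>lborel)"
    by (rule lborel_integral_real_affine) (use P in simp)
  also have "\<dots> = (\<integral>x. \<Phi> * g (z + \<Phi> * x) \<partial>lborel)"
    using P by simp
  also have "\<dots> = (\<integral>x. exp(-z) * (c * x^0 * exp(-\<Phi>*x) / (1+c*x) * indicator {0<..} x) \<partial>lborel)"
  proof (intro Bochner_Integration.integral_cong refl)
    fix x :: real
    show "\<Phi> * g (z + \<Phi> * x) = exp(-z) * (c * x^0 * exp(-\<Phi>*x) / (1+c*x) * indicator {0<..} x)"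
    proof (cases "0 < x")
      case True
      have pos: "0 < z + \<Phi> * x" using z P True by (simp add: add_pos_pos)
      have pos2: "0 < 1 + c * x" using c True by (simp add: add_pos_pos)
      have "\<Phi> * g (z + \<Phi> * x) = \<Phi> / (z + \<Phi> * x) * exp(-z) * exp(-\<Phi>*x)"
        unfolding g_def using True P pos by (simp add: powr_neg_one exp_add[symmetric] exp_diff exp_minus field_simps)
      also have "\<Phi> / (z + \<Phi> * x) = c / (1 + c*x)"
        using c P pos pos2 unfolding z_def by (simp add: field_simps)
      finally show ?thesis using True by simp
    next
      case False
      then have "\<not> z < z + \<Phi> * x" using P by (simp add: zero_less_mult_iff)
      then show ?thesis using False by (simp add: g_def)
    qed
  qed
  also have "\<dots> = exp(-z) * (\<integral>x. c * x^0 * exp(-\<Phi>*x) / (1+c*x) * indicator {0<..} x \<partial>lborel)"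
    by (rule integral_mult_right_zero)
  finally have "upper_Gamma (-real (0::nat)) z = exp(-z) * (\<integral>x. c * x^0 * exp(-\<Phi>*x) / (1+c*x) * indicator {0<..} x \<partial>lborel)" .
  then show ?thesis unfolding z_def[symmetric] by (simp add: exp_minus field_simps)
qed



lemma K_closed:
  assumes c: "0 < (c::real)" and P: "0 < (\<Phi>::real)"
  shows "(\<integral>t. c * t^n * exp(-\<Phi>*t) / (1+c*t) * indicator {0<..} t \<partial>lborel)
       = fact n / c^n * exp(\<Phi>/c) * upper_Gamma (-real n) (\<Phi>/c)"
proof (induction n)
  case 0
  then show ?case using K0[OF c P] by simp
next
  case (Suc n)
  define z where "z = \<Phi>/c"
  have z: "0 < z" unfolding z_def using c P by simp
  define KL where "KL k = (\<integral>t. c * t^k * exp(-\<Phi>*t) / (1+c*t) * indicator {0<..} t \<partial>lborel)" for k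
  define A where "A = upper_Gamma (-real n) z"
  define B where "B = upper_Gamma (-real (Suc n)) z"
  define Q where "Q = c^(n+1)/\<Phi>^(n+1)"
  have hyp: "KL n = fact n / c^n * exp z * A" using Suc.IH unfolding KL_def A_def z_def .
  have rec: "c * KL (Suc n) + KL n = c * fact n / \<Phi>^(n+1)" unfolding KL_def by (rule K_rec[OF c P])
  have zp: "z powr (-real n - 1) = Q"
  proof -
    have "z powr (-real n - 1) = inverse (z powr real (Suc n))"
    proof -
      have "-real n - 1 = - real (Suc n)" by simp
      then show ?thesis by (simp only: powr_minus)
    qed
    also have "\<dots> = inverse (z^(Suc n))" using z by (simp only: powr_realpow)
    finally show ?thesis unfolding Q_def z_def using c P by (simp add: power_divide field_simps)
  qed
  have ug: "A + (real n + 1) * B = Q * exp(-z)"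
    using UG_rec[OF z, of n] unfolding A_def B_def zp .
  have Beq: "B = (Q * exp(-z) - A) / (real n + 1)"
    using ug by (simp add: field_simps)
  have KLeq: "KL (Suc n) = (c * fact n / \<Phi>^(n+1) - KL n) / c"
    using rec c by (simp add: field_simps)
  have "KL (Suc n) = fact (Suc n) / c^(Suc n) * exp z * B"
  proof -
    have "fact (Suc n) / c^(Suc n) * exp z * B = fact n / c^(Suc n) * (exp z * (Q * exp(-z) - A))"
    proof -
      have gen: "(k*f)/C * E * (X/k) = f/C*(E*X)" if "(k::real) > 0" for k f C E X
        using that by simp
      have "fact (Suc n) = (real n + 1) * (fact n :: real)" by (simp add: algebra_simps)
      then show ?thesis unfolding Beq by (simp only:) (rule gen, simp)
    qed
    also have "exp z * (Q * exp(-z) - A) = Q - exp z * A"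
      by (simp add: algebra_simps exp_minus)
    also have "fact n / c^(Suc n) * (Q - exp z * A) = fact n / \<Phi>^(n+1) - fact n / c^(Suc n) * exp z * A"
      unfolding Q_def using c P by (simp add: field_simps)
    also have "\<dots> = KL (Suc n)"
      unfolding KLeq hyp using c by (simp add: field_simps)
    finally show ?thesis ..
  qed
  then show ?case unfolding KL_def B_def z_def .
qed



lemma gamma_pdf_erlang:
  assumes m: "0 < m" and O: "0 < \<Omega>" and x: "x \<noteq> 0"
  shows "gamma_pdf (real m) \<Omega> x = erlang_density (m - 1) (real m / \<Omega>) x"
proof (cases "x > 0")
  case True
  have g: "Gamma (real m) = fact (m - 1)"
    using Gamma_fact[of "m - 1", where 'a=real] m by (simp add: of_nat_diff)
  have p1: "(real m / \<Omega>) powr real m = (real m / \<Omega>)^m"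
    using m O by (simp add: powr_realpow)
  have p2: "x powr (real m - 1) = x^(m-1)"
    using True m by (simp add: powr_realpow[symmetric] of_nat_diff)
  have s: "Suc (m - 1) = m" using m by simp
  show ?thesis unfolding gamma_pdf_def erlang_density_def using True
    by (simp only: g p1 p2 s) (simp add: mult_ac)
next
  case False
  then show ?thesis using x by (simp add: gamma_pdf_def erlang_density_def)
qed

lemma (in prob_space) gamma_to_erlang:
  assumes m: "0 < m" and O: "0 < \<Omega>"
    and D: "distributed M lborel X (\<lambda>x. ennreal (gamma_pdf (real m) \<Omega> x))"
  shows "distributed M lborel X (erlang_density (m - 1) (real m / \<Omega>))"
proof -
  have "distributed M lborel X (\<lambda>x. ennreal (gamma_pdf (real m) \<Omega> x))
     \<longleftrightarrow> distributed M lborel X (\<lambda>x. ennreal (erlang_density (m - 1) (real m / \<Omega>) x))"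
  proof (rule distributed_cong_density)
    show "AE x in lborel. ennreal (gamma_pdf (real m) \<Omega> x) = ennreal (erlang_density (m - 1) (real m / \<Omega>) x)"
      using AE_lborel_singleton[of 0] by eventually_elim (simp add: gamma_pdf_erlang[OF m O])
  qed (auto simp: gamma_pdf_def)
  then show ?thesis using D by simp
qed

lemma (in prob_space) sum_gamma:
  assumes indep: "indep_vars (\<lambda>_. borel) G I" and f: "inj f" "f ` {..<N} \<subseteq> I"
    and N: "0 < N" and m: "0 < m" and O: "0 < \<Omega>"
    and D: "\<And>i. i < N \<Longrightarrow> distributed M lborel (G (f i)) (\<lambda>x. ennreal (gamma_pdf (real m) \<Omega> x))"
  shows "distributed M lborel (\<lambda>\<omega>. \<Sum>i<N. G (f i) \<omega>) (erlang_density (m * N - 1) (real m / \<Omega>))"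
proof -
  have l: "0 < real m / \<Omega>" using m O by simp
  have "distributed M lborel (\<lambda>x. \<Sum>i\<in>f`{..<N}. G i x)
          (erlang_density ((\<Sum>i\<in>f`{..<N}. Suc (m - 1)) - 1) (real m / \<Omega>))"
  proof (rule erlang_distributed_sum)
    show "finite (f ` {..<N})" by simp
    show "f ` {..<N} \<noteq> {}" using N by auto
    show "indep_vars (\<lambda>i. borel) G (f ` {..<N})" by (rule indep_vars_subset[OF indep f(2)])
    fix i assume "i \<in> f ` {..<N}"
    then obtain j where "j < N" "i = f j" by auto
    then show "distributed M lborel (G i) (erlang_density (m - 1) (real m / \<Omega>))"
      using gamma_to_erlang[OF m O D] by simp
  qed (rule l)
  moreover have "(\<Sum>i\<in>f`{..<N}. Suc (m - 1)) = m * N"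
    using m f(1) by (simp add: card_image inj_on_subset[OF f(1)])
  moreover have "(\<lambda>x. \<Sum>i\<in>f`{..<N}. G i x) = (\<lambda>\<omega>. \<Sum>i<N. G (f i) \<omega>)"
    using f(1) by (simp add: sum.reindex inj_on_subset[OF f(1)])
  ultimately show ?thesis by simp
qed

lemma (in prob_space) erlang_gt:
  assumes D: "distributed M lborel g (erlang_density (a - 1) l)" and a: "0 < a" and l: "0 < l"
    and t: "0 \<le> t"
  shows "prob {\<omega>\<in>space M. t < g \<omega>} = exp(-l*t) * (\<Sum>\<mu><a. (l*t)^\<mu> / fact \<mu>)"
proof -
  have "prob {\<omega>\<in>space M. t < g \<omega>} = 1 - erlang_CDF (a - 1) l t"
    using erlang_distributed_gt[OF D l t] by simp
  also have "\<dots> = (\<Sum>n\<le>a-1. (l*t)^n * exp(-l*t) / fact n)"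
    using t by (simp add: erlang_CDF_def)
  also have "{..a-1} = {..<a}" using a by auto
  also have "(\<Sum>n<a. (l*t)^n * exp(-l*t) / fact n) = exp(-l*t) * (\<Sum>\<mu><a. (l*t)^\<mu> / fact \<mu>)"
    by (simp add: sum_distrib_left field_simps)
  finally show ?thesis .
qed

lemma (in prob_space) erlang_pos:
  assumes D: "distributed M lborel g (erlang_density (a - 1) l)" and l: "0 < l"
  shows "AE \<omega> in M. 0 < g \<omega>"
proof (rule AE_I)
  have [measurable]: "g \<in> borel_measurable M" using distributed_measurable[OF D] by simp
  show "{\<omega> \<in> space M. \<not> 0 < g \<omega>} \<subseteq> {\<omega> \<in> space M. g \<omega> \<le> 0}" by auto
  show "{\<omega> \<in> space M. g \<omega> \<le> 0} \<in> events" by measurable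
  have "prob {\<omega> \<in> space M. g \<omega> \<le> 0} = erlang_CDF (a - 1) l 0"
    using erlang_distributed_le[OF D l, of 0] by simp
  then show "emeasure M {\<omega> \<in> space M. g \<omega> \<le> 0} = 0"
    by (simp add: emeasure_eq_measure erlang_CDF_at0)
qed



lemma (in prob_space) indep_sums:
  fixes G :: "gidx \<Rightarrow> 'a \<Rightarrow> real"
  assumes indep: "indep_vars (\<lambda>_. borel) G (SR ` {..<N_r} \<union> SD ` {..<N_d} \<union> RD ` {..<N_d})"
  shows "indep_var borel (\<lambda>\<omega>. \<Sum>i<N_r. G (SR i) \<omega>) borel (\<lambda>\<omega>. \<Sum>j<N_d. G (SD j) \<omega>)"
proof -
  let ?A = "SR ` {..<N_r}" and ?B = "SD ` {..<N_d}"
  have iv: "indep_var (PiM ?A (\<lambda>_. borel)) (\<lambda>\<omega>. restrict (\<lambda>i. G i \<omega>) ?A)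
                      (PiM ?B (\<lambda>_. borel)) (\<lambda>\<omega>. restrict (\<lambda>i. G i \<omega>) ?B)"
    by (rule indep_var_restrict[OF indep]) auto
  have m1: "(\<lambda>f::gidx\<Rightarrow>real. \<Sum>i<N_r. f (SR i)) \<in> borel_measurable (PiM ?A (\<lambda>_. borel))"
  proof (rule borel_measurable_sum)
    fix i assume "i \<in> {..<N_r}"
    then show "(\<lambda>f. f (SR i)) \<in> borel_measurable (PiM ?A (\<lambda>_. borel))"
      using measurable_component_singleton[of "SR i" ?A "\<lambda>_. borel"] by simp
  qed
  have m2: "(\<lambda>f::gidx\<Rightarrow>real. \<Sum>i<N_d. f (SD i)) \<in> borel_measurable (PiM ?B (\<lambda>_. borel))"
  proof (rule borel_measurable_sum)
    fix i assume "i \<in> {..<N_d}"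
    then show "(\<lambda>f. f (SD i)) \<in> borel_measurable (PiM ?B (\<lambda>_. borel))"
      using measurable_component_singleton[of "SD i" ?B "\<lambda>_. borel"] by simp
  qed
  have "indep_var borel ((\<lambda>f. \<Sum>i<N_r. f (SR i)) \<circ> (\<lambda>\<omega>. restrict (\<lambda>i. G i \<omega>) ?A))
                  borel ((\<lambda>f. \<Sum>i<N_d. f (SD i)) \<circ> (\<lambda>\<omega>. restrict (\<lambda>i. G i \<omega>) ?B))"
    by (rule indep_var_compose[OF iv m1 m2])
  moreover have "((\<lambda>f. \<Sum>i<N_r. f (SR i)) \<circ> (\<lambda>\<omega>. restrict (\<lambda>i. G i \<omega>) ?A)) = (\<lambda>\<omega>. \<Sum>i<N_r. G (SR i) \<omega>)"
    by (auto simp: fun_eq_iff intro!: sum.cong)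
  moreover have "((\<lambda>f. \<Sum>i<N_d. f (SD i)) \<circ> (\<lambda>\<omega>. restrict (\<lambda>i. G i \<omega>) ?B)) = (\<lambda>\<omega>. \<Sum>i<N_d. G (SD i) \<omega>)"
    by (auto simp: fun_eq_iff intro!: sum.cong)
  ultimately show ?thesis by simp
qed

lemma (in prob_space) min_ccdf:
  fixes g1 g2 :: "'a \<Rightarrow> real"
  assumes indep: "indep_var borel g1 borel g2"
  shows "prob {\<omega>\<in>space M. t < min (g1 \<omega>) (g2 \<omega>)}
       = prob {\<omega>\<in>space M. t < g1 \<omega>} * prob {\<omega>\<in>space M. t < g2 \<omega>}"
proof -
  have "prob ((\<lambda>x. (g1 x, g2 x)) -` ({t<..} \<times> {t<..}) \<inter> space M) =
    prob (g1 -` {t<..} \<inter> space M) * prob (g2 -` {t<..} \<inter> space M)"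
    by (rule indep_varD[OF indep]) (auto intro!: borel_open simp: open_greaterThan)
  moreover have "(\<lambda>x. (g1 x, g2 x)) -` ({t<..} \<times> {t<..}) \<inter> space M = {\<omega>\<in>space M. t < min (g1 \<omega>) (g2 \<omega>)}"
    by auto
  moreover have "g1 -` {t<..} \<inter> space M = {\<omega>\<in>space M. t < g1 \<omega>}" by auto
  moreover have "g2 -` {t<..} \<inter> space M = {\<omega>\<in>space M. t < g2 \<omega>}" by auto
  ultimately show ?thesis by simp
qed

lemma (in prob_space) layer_cake:
  fixes F d :: "real \<Rightarrow> real"
  assumes X[measurable]: "X \<in> borel_measurable M" and Xpos: "AE \<omega> in M. 0 < X \<omega>"
    and d[measurable]: "d \<in> borel_measurable borel"
    and deriv: "\<And>t. 0 \<le> t \<Longrightarrow> DERIV F t :> d t" and dnn: "\<And>t. 0 \<le> t \<Longrightarrow> 0 \<le> d t"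
    and F0: "F 0 = 0"
  shows "(\<integral>\<^sup>+\<omega>. ennreal (F (X \<omega>)) \<partial>M)
       = (\<integral>\<^sup>+t. ennreal (d t) * indicator {0<..} t * ennreal (prob {\<omega>\<in>space M. t < X \<omega>}) \<partial>lborel)"
proof -
  define f where "f \<omega> t = (if 0 < t \<and> t < X \<omega> then ennreal (d t) else 0)" for \<omega> t
  have step1: "AE \<omega> in M. ennreal (F (X \<omega>)) = (\<integral>\<^sup>+t. f \<omega> t \<partial>lborel)"
    using Xpos
  proof eventually_elim
    fix \<omega> assume pos: "0 < X \<omega>"
    let ?x = "X \<omega>"
    have "(\<integral>\<^sup>+t. ennreal (d t) * indicator {0..?x} t \<partial>lborel) = ennreal (F ?x - F 0)"
      by (rule nn_integral_FTC_Icc[OF d]) (use deriv dnn pos in auto)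
    also have "(\<integral>\<^sup>+t. ennreal (d t) * indicator {0..?x} t \<partial>lborel) = (\<integral>\<^sup>+t. f \<omega> t \<partial>lborel)"
    proof (rule nn_integral_cong_AE)
      show "AE t in lborel. ennreal (d t) * indicator {0..?x} t = f \<omega> t"
        using AE_lborel_singleton[of 0] AE_lborel_singleton[of ?x]
        by eventually_elim (auto simp: f_def split: split_indicator)
    qed
    finally show "ennreal (F (X \<omega>)) = (\<integral>\<^sup>+t. f \<omega> t \<partial>lborel)" using F0 by simp
  qed
  interpret PS: pair_sigma_finite M "lborel :: real measure"
    by (rule pair_sigma_finite.intro) unfold_locales
  have meas: "case_prod f \<in> borel_measurable (M \<Otimes>\<^sub>M lborel)"
    unfolding f_def by measurable
  have "(\<integral>\<^sup>+\<omega>. ennreal (F (X \<omega>)) \<partial>M) = (\<integral>\<^sup>+\<omega>. (\<integral>\<^sup>+t. f \<omega> t \<partial>lborel) \<partial>M)"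
    by (rule nn_integral_cong_AE[OF step1])
  also have "\<dots> = (\<integral>\<^sup>+t. (\<integral>\<^sup>+\<omega>. f \<omega> t \<partial>M) \<partial>lborel)"
    by (rule PS.Fubini'[OF meas, symmetric])
  also have "\<dots> = (\<integral>\<^sup>+t. ennreal (d t) * indicator {0<..} t * ennreal (prob {\<omega>\<in>space M. t < X \<omega>}) \<partial>lborel)"
  proof (rule nn_integral_cong)
    fix t :: real
    show "(\<integral>\<^sup>+\<omega>. f \<omega> t \<partial>M) = ennreal (d t) * indicator {0<..} t * ennreal (prob {\<omega>\<in>space M. t < X \<omega>})"
    proof (cases "0 < t")
      case True
      have "(\<integral>\<^sup>+\<omega>. f \<omega> t \<partial>M) = (\<integral>\<^sup>+\<omega>. ennreal (d t) * indicator {\<omega>\<in>space M. t < X \<omega>} \<omega> \<partial>M)"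
        by (rule nn_integral_cong) (use True in \<open>auto simp: f_def split: split_indicator\<close>)
      also have "\<dots> = ennreal (d t) * emeasure M {\<omega>\<in>space M. t < X \<omega>}"
        by (rule nn_integral_cmult_indicator) measurable
      finally show ?thesis using True by (simp add: emeasure_eq_measure)
    next
      case False
      then show ?thesis by (simp add: f_def)
    qed
  qed
  finally show ?thesis .
qed



lemma S_expand:
  fixes b1 b2 t :: real
  shows "exp(-(b1+b2)*t) * ((\<Sum>\<mu><a. (b1*t)^\<mu>/fact \<mu>) * (\<Sum>\<nu><b. (b2*t)^\<nu>/fact \<nu>))
   = (\<Sum>\<mu><a. \<Sum>\<nu><b. (b1^\<mu>*b2^\<nu>/(fact \<mu>*fact \<nu>)) * (t^(\<mu>+\<nu>)*exp(-(b1+b2)*t)))"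
proof -
  have "(\<Sum>\<mu><a. (b1*t)^\<mu>/fact \<mu>) * (\<Sum>\<nu><b. (b2*t)^\<nu>/fact \<nu>)
      = (\<Sum>\<mu><a. \<Sum>\<nu><b. (b1*t)^\<mu>/fact \<mu> * ((b2*t)^\<nu>/fact \<nu>))"
    by (rule sum_product)
  then have "exp(-(b1+b2)*t) * ((\<Sum>\<mu><a. (b1*t)^\<mu>/fact \<mu>) * (\<Sum>\<nu><b. (b2*t)^\<nu>/fact \<nu>))
      = (\<Sum>\<mu><a. \<Sum>\<nu><b. exp(-(b1+b2)*t) * ((b1*t)^\<mu>/fact \<mu> * ((b2*t)^\<nu>/fact \<nu>)))"
    by (simp add: sum_distrib_left)
  also have "\<dots> = (\<Sum>\<mu><a. \<Sum>\<nu><b. (b1^\<mu>*b2^\<nu>/(fact \<mu>*fact \<nu>)) * (t^(\<mu>+\<nu>)*exp(-(b1+b2)*t)))"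
    by (intro sum.cong refl) (simp only: power_mult_distrib power_add, simp add: mult_ac)
  finally show ?thesis .
qed

lemma integral_combo:
  fixes c1 c2 \<Phi> C :: real and w :: "nat \<Rightarrow> nat \<Rightarrow> real"
  assumes c1: "0 < c1" and c2: "0 < c2" and P: "0 < \<Phi>"
  defines "k \<equiv> \<lambda>c n t. c * t^n * exp(-\<Phi>*t) / (1+c*t) * indicator {0<..} t"
  shows "integrable lborel (\<lambda>t. C * (\<Sum>\<mu><a. \<Sum>\<nu><b. w \<mu> \<nu> * (k c1 (\<mu>+\<nu>) t - k c2 (\<mu>+\<nu>) t)))"
    and "(\<integral>t. C * (\<Sum>\<mu><a. \<Sum>\<nu><b. w \<mu> \<nu> * (k c1 (\<mu>+\<nu>) t - k c2 (\<mu>+\<nu>) t)) \<partial>lborel)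
         = C * (\<Sum>\<mu><a. \<Sum>\<nu><b. w \<mu> \<nu> * ((\<integral>t. k c1 (\<mu>+\<nu>) t \<partial>lborel) - (\<integral>t. k c2 (\<mu>+\<nu>) t \<partial>lborel)))"
proof -
  have I1: "integrable lborel (k c1 n)" for n unfolding k_def by (rule K_integrable[OF c1 P])
  have I2: "integrable lborel (k c2 n)" for n unfolding k_def by (rule K_integrable[OF c2 P])
  have Id: "integrable lborel (\<lambda>t. w \<mu> \<nu> * (k c1 (\<mu>+\<nu>) t - k c2 (\<mu>+\<nu>) t))" for \<mu> \<nu>
    by (intro integrable_mult_right Bochner_Integration.integrable_diff I1 I2)
  have Is: "integrable lborel (\<lambda>t. \<Sum>\<nu><b. w \<mu> \<nu> * (k c1 (\<mu>+\<nu>) t - k c2 (\<mu>+\<nu>) t))" for \<mu>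
    by (intro Bochner_Integration.integrable_sum Id)
  show "integrable lborel (\<lambda>t. C * (\<Sum>\<mu><a. \<Sum>\<nu><b. w \<mu> \<nu> * (k c1 (\<mu>+\<nu>) t - k c2 (\<mu>+\<nu>) t)))"
    by (intro integrable_mult_right Bochner_Integration.integrable_sum Is)
  have "(\<integral>t. C * (\<Sum>\<mu><a. \<Sum>\<nu><b. w \<mu> \<nu> * (k c1 (\<mu>+\<nu>) t - k c2 (\<mu>+\<nu>) t)) \<partial>lborel)
       = C * (\<Sum>\<mu><a. \<integral>t. (\<Sum>\<nu><b. w \<mu> \<nu> * (k c1 (\<mu>+\<nu>) t - k c2 (\<mu>+\<nu>) t)) \<partial>lborel)"
    by (simp only: integral_mult_right_zero Bochner_Integration.integral_sum[OF Is])
  also have "\<dots> = C * (\<Sum>\<mu><a. \<Sum>\<nu><b. \<integral>t. w \<mu> \<nu> * (k c1 (\<mu>+\<nu>) t - k c2 (\<mu>+\<nu>) t) \<partial>lborel)"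
    by (simp only: Bochner_Integration.integral_sum[OF Id])
  also have "\<dots> = C * (\<Sum>\<mu><a. \<Sum>\<nu><b. w \<mu> \<nu> * ((\<integral>t. k c1 (\<mu>+\<nu>) t \<partial>lborel) - (\<integral>t. k c2 (\<mu>+\<nu>) t \<partial>lborel)))"
    by (simp only: integral_mult_right_zero Bochner_Integration.integral_diff[OF I1 I2])
  finally show "(\<integral>t. C * (\<Sum>\<mu><a. \<Sum>\<nu><b. w \<mu> \<nu> * (k c1 (\<mu>+\<nu>) t - k c2 (\<mu>+\<nu>) t)) \<partial>lborel)
         = C * (\<Sum>\<mu><a. \<Sum>\<nu><b. w \<mu> \<nu> * ((\<integral>t. k c1 (\<mu>+\<nu>) t \<partial>lborel) - (\<integral>t. k c2 (\<mu>+\<nu>) t \<partial>lborel)))" .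
qed



theorem theorem2:
  fixes M :: "'a measure" and G :: "gidx \<Rightarrow> 'a \<Rightarrow> real"
    and N_r N_d m_sr m_sd m_rd :: nat
    and \<Omega>_sr \<Omega>_sd \<Omega>_rd \<rho> a\<^sub>1 a\<^sub>2 :: real
  assumes "prob_space M"
    and "N_r > 0" "N_d > 0" "m_sr > 0" "m_sd > 0" "m_rd > 0"
    and "\<Omega>_sr > 0" "\<Omega>_sd > 0" "\<Omega>_rd > 0" "\<rho> > 0"
    and "0 < a\<^sub>1" "a\<^sub>1 < 1" "0 < a\<^sub>2" "a\<^sub>2 < 1" "a\<^sub>1 + a\<^sub>2 = 1" "a\<^sub>1 > a\<^sub>2"
    and indep: "prob_space.indep_vars M (\<lambda>_. borel) G
                  (SR ` {..<N_r} \<union> SD ` {..<N_d} \<union> RD ` {..<N_d})"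
    and dist_sr: "\<And>i. i < N_r \<Longrightarrow>
          distributed M lborel (G (SR i)) (\<lambda>x. ennreal (gamma_pdf (real m_sr) \<Omega>_sr x))"
    and dist_sd: "\<And>j. j < N_d \<Longrightarrow>
          distributed M lborel (G (SD j)) (\<lambda>x. ennreal (gamma_pdf (real m_sd) \<Omega>_sd x))"
    and dist_rd: "\<And>k. k < N_d \<Longrightarrow>
          distributed M lborel (G (RD k)) (\<lambda>x. ennreal (gamma_pdf (real m_rd) \<Omega>_rd x))"
  shows "(let g_sr = (\<lambda>\<omega>. \<Sum>i<N_r. G (SR i) \<omega>);
              g_sd = (\<lambda>\<omega>. \<Sum>j<N_d. G (SD j) \<omega>);
              X = (\<lambda>\<omega>. min (g_sr \<omega>) (g_sd \<omega>));
              \<Phi> = real m_sr / \<Omega>_sr + real m_sd / \<Omega>_sd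
          in (1/2) * prob_space.expectation M
                       (\<lambda>\<omega>. log 2 (1 + \<rho> * X \<omega>) - log 2 (1 + a\<^sub>2 * \<rho> * X \<omega>))
             = 1 / (2 * ln 2) *
               (\<Sum>\<mu><m_sr * N_r. \<Sum>\<nu><m_sd * N_d.
                  (real m_sr ^ \<mu> * real m_sd ^ \<nu> * Gamma (real (\<mu> + \<nu> + 1)))
                  / (\<Omega>_sr ^ \<mu> * \<Omega>_sd ^ \<nu> * fact \<mu> * fact \<nu> * \<rho> ^ (\<mu> + \<nu>))
                  * (exp (\<Phi> / \<rho>) * upper_Gamma (- real (\<mu> + \<nu>)) (\<Phi> / \<rho>)
                     - 1 / a\<^sub>2 ^ (\<mu> + \<nu>) * exp (\<Phi> / (\<rho> * a\<^sub>2))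
                         * upper_Gamma (- real (\<mu> + \<nu>)) (\<Phi> / (\<rho> * a\<^sub>2)))))"
proof -
  interpret prob_space M by (rule assms(1))
  have Nr: "0 < N_r" and Nd: "0 < N_d" and msr: "0 < m_sr" and msd: "0 < m_sd"
    and Osr: "0 < \<Omega>_sr" and Osd: "0 < \<Omega>_sd" and rho: "0 < \<rho>" and a2: "0 < a\<^sub>2" "a\<^sub>2 < 1"
    using assms by auto
  define b1 where "b1 = real m_sr / \<Omega>_sr"
  define b2 where "b2 = real m_sd / \<Omega>_sd"
  define \<Phi> where "\<Phi> = b1 + b2"
  have b1: "0 < b1" and b2: "0 < b2"
    using msr msd Osr Osd by (auto simp: b1_def b2_def)
  have P: "0 < \<Phi>" using b1 b2 by (simp add: \<Phi>_def)
  define g1 where "g1 = (\<lambda>\<omega>. \<Sum>i<N_r. G (SR i) \<omega>)"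
  define g2 where "g2 = (\<lambda>\<omega>. \<Sum>j<N_d. G (SD j) \<omega>)"
  define X where "X = (\<lambda>\<omega>. min (g1 \<omega>) (g2 \<omega>))"
  have injSR: "inj SR" and injSD: "inj SD" by (auto simp: inj_def)
  have D1: "distributed M lborel g1 (erlang_density (m_sr * N_r - 1) b1)"
    unfolding g1_def b1_def by (rule sum_gamma[OF indep injSR _ Nr msr Osr dist_sr]) auto
  have D2: "distributed M lborel g2 (erlang_density (m_sd * N_d - 1) b2)"
    unfolding g2_def b2_def by (rule sum_gamma[OF indep injSD _ Nd msd Osd dist_sd]) auto
  have ind: "indep_var borel g1 borel g2"
    unfolding g1_def g2_def by (rule indep_sums[OF indep])
  have [measurable]: "g1 \<in> borel_measurable M" using distributed_measurable[OF D1] by simp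
  have [measurable]: "g2 \<in> borel_measurable M" using distributed_measurable[OF D2] by simp
  have Xm[measurable]: "X \<in> borel_measurable M" unfolding X_def by measurable
  have Xpos: "AE \<omega> in M. 0 < X \<omega>"
    using erlang_pos[OF D1 b1] erlang_pos[OF D2 b2] by eventually_elim (simp add: X_def)
  define S where "S t = exp(-\<Phi>*t) * ((\<Sum>\<mu><m_sr * N_r. (b1*t)^\<mu>/fact \<mu>) * (\<Sum>\<nu><m_sd * N_d. (b2*t)^\<nu>/fact \<nu>))" for t
  have PS: "prob {\<omega>\<in>space M. t < X \<omega>} = S t" if t: "0 \<le> t" for t
  proof -
    have "prob {\<omega>\<in>space M. t < X \<omega>} = prob {\<omega>\<in>space M. t < g1 \<omega>} * prob {\<omega>\<in>space M. t < g2 \<omega>}"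
      unfolding X_def by (rule min_ccdf[OF ind])
    also have "\<dots> = exp(-b1*t) * (\<Sum>\<mu><m_sr * N_r. (b1*t)^\<mu>/fact \<mu>) * (exp(-b2*t) * (\<Sum>\<nu><m_sd * N_d. (b2*t)^\<nu>/fact \<nu>))"
      using erlang_gt[OF D1 _ b1 t] erlang_gt[OF D2 _ b2 t] msr Nr msd Nd by simp
    also have "\<dots> = S t" unfolding S_def \<Phi>_def by (simp add: mult_ac exp_add[symmetric] algebra_simps)
    finally show ?thesis .
  qed
  define F where "F x = log 2 (1 + \<rho> * x) - log 2 (1 + a\<^sub>2 * \<rho> * x)" for x
  define d where "d t = (1 / ln 2) * (\<rho> / (1 + \<rho>*t) - (\<rho>*a\<^sub>2) / (1 + (\<rho>*a\<^sub>2)*t))" for t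
  have dm[measurable]: "d \<in> borel_measurable borel" unfolding d_def by measurable
  have deriv: "DERIV F t :> d t" if "0 \<le> t" for t
  proof -
    have p1: "0 < 1 + \<rho>*t" using rho that by (simp add: add_pos_nonneg)
    have p2: "0 < 1 + a\<^sub>2*\<rho>*t" using rho a2 that by (simp add: add_pos_nonneg)
    have "DERIV F t :> (1 / (ln 2 * (1 + \<rho>*t))) * (0 + \<rho> * 1) - (1 / (ln 2 * (1 + a\<^sub>2*\<rho>*t))) * (0 + a\<^sub>2*\<rho> * 1)"
      unfolding F_def using p1 p2
      by (intro derivative_intros DERIV_chain2[OF DERIV_log]) auto
    moreover have "(1 / (ln 2 * (1 + \<rho>*t))) * (0 + \<rho> * 1) - (1 / (ln 2 * (1 + a\<^sub>2*\<rho>*t))) * (0 + a\<^sub>2*\<rho> * 1) = d t"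
      unfolding d_def by (simp add: right_diff_distrib mult_ac)
    ultimately show ?thesis by (rule DERIV_cong)
  qed
  have dnn: "0 \<le> d t" if "0 \<le> t" for t
  proof -
    have p1: "0 < 1 + \<rho>*t" using rho that by (simp add: add_pos_nonneg)
    have p2: "0 < 1 + (\<rho>*a\<^sub>2)*t" using rho a2 that by (simp add: add_pos_nonneg)
    have "(\<rho>*a\<^sub>2) / (1 + (\<rho>*a\<^sub>2)*t) \<le> \<rho> / (1 + \<rho>*t)"
      using p1 p2 rho a2 that by (simp add: divide_simps mult_left_mono mult_right_mono algebra_simps)
    then show ?thesis unfolding d_def by simp
  qed
  have F0: "F 0 = 0" unfolding F_def by simp
  have Fnn: "0 \<le> F x" if "0 \<le> x" for x
  proof -
    have "1 + a\<^sub>2 * \<rho> * x \<le> 1 + \<rho> * x"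
      using a2 rho that by (simp add: mult_right_mono)
    moreover have "0 < 1 + a\<^sub>2 * \<rho> * x" using a2 rho that by (simp add: add_pos_nonneg)
    ultimately show ?thesis unfolding F_def by simp
  qed
  define w where "w \<mu> \<nu> = b1^\<mu>*b2^\<nu>/(fact \<mu>*fact \<nu>)" for \<mu> \<nu> :: nat
  define k where "k = (\<lambda>c n t. c * t^n * exp(-\<Phi>*t) / (1+c*t) * indicator {0<..} t :: real)"
  define H where "H t = (1 / ln 2) * (\<Sum>\<mu><m_sr * N_r. \<Sum>\<nu><m_sd * N_d. w \<mu> \<nu> * (k \<rho> (\<mu>+\<nu>) t - k (\<rho>*a\<^sub>2) (\<mu>+\<nu>) t))" for t
  have c2: "0 < \<rho>*a\<^sub>2" using rho a2 by simp
  have Hint: "integrable lborel H"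
    unfolding H_def k_def by (rule integral_combo(1)[OF rho c2 P])
  have Hval: "(\<integral>t. H t \<partial>lborel) = (1 / ln 2) * (\<Sum>\<mu><m_sr * N_r. \<Sum>\<nu><m_sd * N_d.
        w \<mu> \<nu> * ((\<integral>t. k \<rho> (\<mu>+\<nu>) t \<partial>lborel) - (\<integral>t. k (\<rho>*a\<^sub>2) (\<mu>+\<nu>) t \<partial>lborel)))"
    unfolding H_def k_def by (rule integral_combo(2)[OF rho c2 P])
  have Heq: "H t = d t * S t * indicator {0<..} t" for t
  proof (cases "0 < t")
    case True
    have "S t = (\<Sum>\<mu><m_sr * N_r. \<Sum>\<nu><m_sd * N_d. w \<mu> \<nu> * (t^(\<mu>+\<nu>)*exp(-\<Phi>*t)))"
      unfolding S_def \<Phi>_def w_def by (rule S_expand)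
    then have "d t * S t = (\<Sum>\<mu><m_sr * N_r. \<Sum>\<nu><m_sd * N_d. w \<mu> \<nu> * (d t * (t^(\<mu>+\<nu>)*exp(-\<Phi>*t))))"
      by (simp add: sum_distrib_left mult_ac)
    also have "\<dots> = H t"
      unfolding H_def sum_distrib_left
    proof (intro sum.cong refl)
      fix \<mu> \<nu> :: nat
      have p1: "1 + \<rho>*t \<noteq> 0" using rho True by (smt (verit) mult_pos_pos)
      have p2: "1 + (\<rho>*a\<^sub>2)*t \<noteq> 0" using c2 True by (smt (verit) mult_pos_pos)
      show "w \<mu> \<nu> * (d t * (t^(\<mu>+\<nu>)*exp(-\<Phi>*t))) = 1 / ln 2 * (w \<mu> \<nu> * (k \<rho> (\<mu>+\<nu>) t - k (\<rho>*a\<^sub>2) (\<mu>+\<nu>) t))"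
        unfolding d_def k_def using True by (simp add: field_simps)
    qed
    finally show ?thesis using True by simp
  next
    case False
    then show ?thesis unfolding H_def k_def by simp
  qed
  have Hnn: "0 \<le> H t" for t
    unfolding Heq using dnn[of t] b1 b2 by (auto simp: S_def intro!: mult_nonneg_nonneg sum_nonneg divide_nonneg_nonneg zero_le_power split: split_indicator)
  have KK: "(\<integral>t. k c n t \<partial>lborel) = fact n / c^n * exp(\<Phi>/c) * upper_Gamma (-real n) (\<Phi>/c)" if "0 < c" for c n
    unfolding k_def by (rule K_closed[OF that P])
  have E1: "expectation (\<lambda>\<omega>. F (X \<omega>)) = enn2real (\<integral>\<^sup>+\<omega>. ennreal (F (X \<omega>)) \<partial>M)"
    by (rule integral_eq_nn_integral) (use Xpos Fnn in \<open>auto simp: F_def elim!: eventually_mono\<close>)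
  also have "(\<integral>\<^sup>+\<omega>. ennreal (F (X \<omega>)) \<partial>M)
      = (\<integral>\<^sup>+t. ennreal (d t) * indicator {0<..} t * ennreal (prob {\<omega>\<in>space M. t < X \<omega>}) \<partial>lborel)"
    by (rule layer_cake[OF Xm Xpos dm deriv dnn F0])
  also have "\<dots> = (\<integral>\<^sup>+t. ennreal (H t) \<partial>lborel)"
  proof (rule nn_integral_cong)
    fix t :: real
    show "ennreal (d t) * indicator {0<..} t * ennreal (prob {\<omega>\<in>space M. t < X \<omega>}) = ennreal (H t)"
    proof (cases "0 < t")
      case True
      then show ?thesis unfolding Heq using PS[of t] dnn[of t] by (simp add: ennreal_mult')
    qed (simp add: Heq)
  qed
  also have "\<dots> = ennreal (\<integral>t. H t \<partial>lborel)"
    by (rule nn_integral_eq_integral[OF Hint]) (simp add: Hnn)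
  finally have E2: "expectation (\<lambda>\<omega>. F (X \<omega>)) = (\<integral>t. H t \<partial>lborel)"
    using Bochner_Integration.integral_nonneg[of lborel H] Hnn by simp
  have main: "expectation (\<lambda>\<omega>. F (X \<omega>)) = (1 / ln 2) * (\<Sum>\<mu><m_sr * N_r. \<Sum>\<nu><m_sd * N_d.
        w \<mu> \<nu> * (fact (\<mu>+\<nu>) / \<rho>^(\<mu>+\<nu>) * exp(\<Phi>/\<rho>) * upper_Gamma (-real (\<mu>+\<nu>)) (\<Phi>/\<rho>)
           - fact (\<mu>+\<nu>) / (\<rho>*a\<^sub>2)^(\<mu>+\<nu>) * exp(\<Phi>/(\<rho>*a\<^sub>2)) * upper_Gamma (-real (\<mu>+\<nu>)) (\<Phi>/(\<rho>*a\<^sub>2))))"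
    unfolding E2 Hval KK[OF rho] KK[OF c2] ..
  have trm: "w \<mu> \<nu> * (fact (\<mu>+\<nu>) / \<rho>^(\<mu>+\<nu>) * exp(\<Phi>/\<rho>) * upper_Gamma (-real (\<mu>+\<nu>)) (\<Phi>/\<rho>)
           - fact (\<mu>+\<nu>) / (\<rho>*a\<^sub>2)^(\<mu>+\<nu>) * exp(\<Phi>/(\<rho>*a\<^sub>2)) * upper_Gamma (-real (\<mu>+\<nu>)) (\<Phi>/(\<rho>*a\<^sub>2)))
      = (real m_sr ^ \<mu> * real m_sd ^ \<nu> * Gamma (real (\<mu> + \<nu> + 1)))
                  / (\<Omega>_sr ^ \<mu> * \<Omega>_sd ^ \<nu> * fact \<mu> * fact \<nu> * \<rho> ^ (\<mu> + \<nu>))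
                  * (exp (\<Phi> / \<rho>) * upper_Gamma (- real (\<mu> + \<nu>)) (\<Phi> / \<rho>)
                     - 1 / a\<^sub>2 ^ (\<mu> + \<nu>) * exp (\<Phi> / (\<rho> * a\<^sub>2))
                         * upper_Gamma (- real (\<mu> + \<nu>)) (\<Phi> / (\<rho> * a\<^sub>2)))" for \<mu> \<nu>
  proof -
    have g: "Gamma (real (\<mu> + \<nu> + 1)) = fact (\<mu> + \<nu>)"
      using Gamma_fact[of "\<mu> + \<nu>", where 'a=real] by (simp add: add_ac)
    show ?thesis unfolding g w_def b1_def b2_def
      using Osr Osd rho a2 by (simp add: field_simps power_divide power_mult_distrib)
  qed
  have XX: "(\<lambda>\<omega>. F (min (g1 \<omega>) (g2 \<omega>))) = (\<lambda>\<omega>. F (X \<omega>))" unfolding X_def ..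
  show ?thesis
    unfolding Let_def g1_def[symmetric] g2_def[symmetric]
      b1_def[symmetric] b2_def[symmetric] \<Phi>_def[symmetric] F_def[symmetric]
    unfolding XX main trm[symmetric] by simp
qed


end
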